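(* Let $G$ be a finite $d$-regular graph and let $k<d$ be a positive integer. Let $S=(v_1,\ldots,v_m)$, $m\geq1$, be a maximal $k$-$L$-sequence of $G$ (no vertex can be appended to the end of $S$ to obtain a longer $k$-$L$-sequence), and let $x=v_m$ be its last vertex. Then there exists a vertex $y\neq x$, $y\in N(x)$, such that $y$ lies in the open neighborhoods $N(v_j)$ of exactly $k-1$ of the vertices $v_1,\ldots,v_{m-1}$ (i.e., $x$ footprints $y$ for the $k$-th time).
   Context: For a vertex $v$, $N(v)$ is its open neighborhood and $N[v]=N(v)\cup\{v\}$. A sequence $S=(v_1,\ldots,v_m)$ of distinct vertices is a $k$-$L$-sequence if for each $i$ there is $u_i\in N[v_i]$ such that the number of indices $j<i$ with $u_i\in N(v_j)$ is less than $k$. A vertex $v_i$ of $S$ is said to footprint $u$ for the $r$-th time if $u\in N[v_i]$ and $u$ lies in $N(v_j)$ for exactly $r-1$ indices $j<i$. *)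

theory Defs
  imports Main
begin

definition simple_graph :: "'a set \<Rightarrow> ('a \<Rightarrow> 'a \<Rightarrow> bool) \<Rightarrow> bool" where
  "simple_graph V E \<longleftrightarrow> finite V \<and> (\<forall>u v. E u v \<longrightarrow> u \<in> V \<and> v \<in> V)
     \<and> (\<forall>u v. E u v \<longrightarrow> E v u) \<and> (\<forall>u. \<not> E u u)"

definition open_nbhd :: "'a set \<Rightarrow> ('a \<Rightarrow> 'a \<Rightarrow> bool) \<Rightarrow> 'a \<Rightarrow> 'a set" where
  "open_nbhd V E v = {u \<in> V. E v u}"

definition closed_nbhd :: "'a set \<Rightarrow> ('a \<Rightarrow> 'a \<Rightarrow> bool) \<Rightarrow> 'a \<Rightarrow> 'a set" where
  "closed_nbhd V E v = insert v (open_nbhd V E v)"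

definition regular :: "'a set \<Rightarrow> ('a \<Rightarrow> 'a \<Rightarrow> bool) \<Rightarrow> nat \<Rightarrow> bool" where
  "regular V E d \<longleftrightarrow> (\<forall>v\<in>V. card (open_nbhd V E v) = d)"

definition prior_count :: "'a set \<Rightarrow> ('a \<Rightarrow> 'a \<Rightarrow> bool) \<Rightarrow> 'a list \<Rightarrow> nat \<Rightarrow> 'a \<Rightarrow> nat" where
  "prior_count V E S i u = card {j. j < i \<and> u \<in> open_nbhd V E (S ! j)}"

definition kL_sequence :: "'a set \<Rightarrow> ('a \<Rightarrow> 'a \<Rightarrow> bool) \<Rightarrow> nat \<Rightarrow> 'a list \<Rightarrow> bool" where
  "kL_sequence V E k S \<longleftrightarrow> distinct S \<and> set S \<subseteq> V \<and>
     (\<forall>i < length S. \<exists>u \<in> closed_nbhd V E (S ! i). prior_count V E S i u < k)"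

definition maximal_kL_sequence :: "'a set \<Rightarrow> ('a \<Rightarrow> 'a \<Rightarrow> bool) \<Rightarrow> nat \<Rightarrow> 'a list \<Rightarrow> bool" where
  "maximal_kL_sequence V E k S \<longleftrightarrow> kL_sequence V E k S \<and>
     (\<forall>v \<in> V. \<not> kL_sequence V E k (S @ [v]))"

end

theory Submission
  imports Defs
begin

lemma pc_append:
  assumes "i \<le> length S"
  shows "prior_count V E (S @ [v]) i u = prior_count V E S i u"
proof -
  have "{j. j < i \<and> u \<in> open_nbhd V E ((S @ [v]) ! j)} = {j. j < i \<and> u \<in> open_nbhd V E (S ! j)}"
    using assms by (auto simp: nth_append)
  thus ?thesis by (simp add: prior_count_def)
qed

lemma pc_Suc:
  "prior_count V E S (Suc i) u = prior_count V E S i u + (if u \<in> open_nbhd V E (S ! i) then 1 else 0)"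
proof -
  let ?A = "{j. j < i \<and> u \<in> open_nbhd V E (S ! j)}"
  have fin: "finite ?A" by simp
  show ?thesis
  proof (cases "u \<in> open_nbhd V E (S ! i)")
    case True
    hence "{j. j < Suc i \<and> u \<in> open_nbhd V E (S ! j)} = insert i ?A" by (auto simp: less_Suc_eq)
    thus ?thesis using True fin by (simp add: prior_count_def)
  next
    case False
    hence "{j. j < Suc i \<and> u \<in> open_nbhd V E (S ! j)} = ?A" by (auto simp: less_Suc_eq)
    thus ?thesis using False by (simp add: prior_count_def)
  qed
qed

lemma nbhd_in_S:
  assumes "simple_graph V E"
  shows "card (open_nbhd V E u \<inter> set S) \<le> prior_count V E S (length S) u"
proof -
  have "open_nbhd V E u \<inter> set S \<subseteq> (\<lambda>j. S ! j) ` {j. j < length S \<and> u \<in> open_nbhd V E (S ! j)}"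
  proof
    fix w assume w: "w \<in> open_nbhd V E u \<inter> set S"
    then obtain j where j: "j < length S" "S ! j = w" by (auto simp: in_set_conv_nth)
    have "E u w" "u \<in> V" using w assms by (auto simp: open_nbhd_def simple_graph_def)
    hence "u \<in> open_nbhd V E w" using assms by (auto simp: open_nbhd_def simple_graph_def)
    thus "w \<in> (\<lambda>j. S ! j) ` {j. j < length S \<and> u \<in> open_nbhd V E (S ! j)}" using j by force
  qed
  hence "card (open_nbhd V E u \<inter> set S) \<le> card ((\<lambda>j. S ! j) ` {j. j < length S \<and> u \<in> open_nbhd V E (S ! j)})"
    by (intro card_mono) auto
  also have "\<dots> \<le> prior_count V E S (length S) u"
    unfolding prior_count_def by (rule card_image_le) simp
  finally show ?thesis .
qed

lemma extend:
  assumes g: "simple_graph V E" and r: "regular V E d" and kd: "k < d"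
    and kl: "kL_sequence V E k S" and uV: "u \<in> V"
    and c: "prior_count V E S (length S) u < k"
  shows "\<exists>v\<in>V. kL_sequence V E k (S @ [v])"
proof -
  have fin: "finite (open_nbhd V E u)" using g by (auto simp: simple_graph_def open_nbhd_def)
  have cd: "card (open_nbhd V E u) = d" using r uV by (simp add: regular_def)
  have "card (open_nbhd V E u \<inter> set S) < card (open_nbhd V E u)"
    using nbhd_in_S[OF g, of u S] c kd cd by simp
  hence "\<not> open_nbhd V E u \<subseteq> set S" by (metis Int_absorb2 less_irrefl)
  then obtain v where v: "v \<in> open_nbhd V E u" "v \<notin> set S" by blast
  have vV: "v \<in> V" and Euv: "E u v" using v by (auto simp: open_nbhd_def)
  have Evu: "E v u" using g Euv by (auto simp: simple_graph_def)
  have "kL_sequence V E k (S @ [v])"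
    unfolding kL_sequence_def
  proof (intro conjI allI impI)
    show "distinct (S @ [v])" using kl v by (auto simp: kL_sequence_def)
    show "set (S @ [v]) \<subseteq> V" using kl vV by (auto simp: kL_sequence_def)
    fix i assume i: "i < length (S @ [v])"
    show "\<exists>w\<in>closed_nbhd V E ((S @ [v]) ! i). prior_count V E (S @ [v]) i w < k"
    proof (cases "i < length S")
      case True
      then obtain w where "w \<in> closed_nbhd V E (S ! i)" "prior_count V E S i w < k"
        using kl by (auto simp: kL_sequence_def)
      thus ?thesis using True pc_append[of i S V E v w] by (metis less_imp_le nth_append)
    next
      case False
      hence ie: "i = length S" using i by simp
      have "u \<in> closed_nbhd V E v" using uV Evu by (simp add: closed_nbhd_def open_nbhd_def)
      thus ?thesis using ie c pc_append[of "length S" S V E v u] by (metis le_refl nth_append_length)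
    qed
  qed
  thus ?thesis using vV by blast
qed

theorem mainTheorem10:
  fixes V :: "'a set" and E :: "'a \<Rightarrow> 'a \<Rightarrow> bool" and d k :: nat and S :: "'a list"
  assumes "simple_graph V E"
    and "regular V E d"
    and "0 < k" and "k < d"
    and "maximal_kL_sequence V E k S"
    and "length S \<ge> 1"
  shows "\<exists>y. y \<noteq> last S \<and> y \<in> open_nbhd V E (last S) \<and>
           prior_count V E S (length S - 1) y = k - 1"
proof -
  note g = assms(1)
  have kl: "kL_sequence V E k S" and mx: "\<forall>v\<in>V. \<not> kL_sequence V E k (S @ [v])"
    using assms(5) by (auto simp: maximal_kL_sequence_def)
  define m where "m = length S - 1"
  have lm: "length S = Suc m" using assms(6) m_def by simp
  have x: "last S = S ! m" using lm by (metis last_conv_nth list.size(3) m_def nat.distinct(1))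
  have xV: "S ! m \<in> V" using kl lm by (auto simp: kL_sequence_def)
  obtain u where u: "u \<in> closed_nbhd V E (S ! m)" "prior_count V E S m u < k"
    using kl lm by (auto simp: kL_sequence_def)
  have uV: "u \<in> V" using u xV by (auto simp: closed_nbhd_def open_nbhd_def)
  have tot: "prior_count V E S (length S) u = prior_count V E S m u + (if u \<in> open_nbhd V E (S ! m) then 1 else 0)"
    using lm pc_Suc[of V E S m u] by simp
  have un: "u \<in> open_nbhd V E (S ! m)"
  proof (rule ccontr)
    assume "u \<notin> open_nbhd V E (S ! m)"
    hence "prior_count V E S (length S) u < k" using tot u by simp
    thus False using extend[OF g assms(2) assms(4) kl uV] mx by blast
  qed
  have ck: "prior_count V E S m u = k - 1"
  proof (rule ccontr)
    assume "prior_count V E S m u \<noteq> k - 1"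
    hence "prior_count V E S (length S) u < k" using tot u un by auto
    thus False using extend[OF g assms(2) assms(4) kl uV] mx by blast
  qed
  have "u \<noteq> S ! m" using un g by (auto simp: open_nbhd_def simple_graph_def)
  thus ?thesis using un ck x m_def by auto
qed

end
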